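(* Let $p_{1}, p_{2}, r \in \mathbb N$ and $T(p_{1},p_{2},r):=\sum_{n=1}^\infty \frac{(-1)^{n+1}H_n^{(p_{1})}H_n^{(p_{2})}}{n+r}$. Then \begin{align*} T(p_{1},p_{2},r) &=(-1)^{r}\left(S_{p_{1},p_{2},1}^{+,+,-}-S_{p_{1},p_{2}+1}^{+,-}-S_{p_{2},p_{1}+1}^{+,-}+\overline{\zeta}(p_{1}+p_{2}+1)\right)\\ &\quad +\sum_{j=1}^{r-1}(-1)^{r-1-j}\big(S(p_{1},p_{2},1,j,1)+S(p_{2},p_{1},1,j,1)\big) +\sum_{j=1}^{r-1}(-1)^{r-j}S(0,p_{1}+p_{2}+1,1,j,1)\,. \end{align*}
   Context: $H_n^{(q)}=\sum_{j=1}^n j^{-q}$ for $q\in\mathbb N$, and $H_n^{(0)}:=n$. For $q\in\{0\}\cup\mathbb N$ and $m,t,j\in\mathbb N$, $S(q,m,t,j,1):=\sum_{n=1}^\infty\frac{(-1)^{n+1}H_n^{(q)}}{n^{m}(n+j)^{t}}$. $S_{p,q}^{+,-}:=\sum_{n\ge1}(-1)^{n-1}H_n^{(p)}/n^q$, $S_{p_1,p_2,q}^{+,+,-}:=\sum_{n\ge1}(-1)^{n-1}H_n^{(p_1)}H_n^{(p_2)}/n^q$, and $\overline{\zeta}(s)=\sum_{n\ge1}(-1)^{n-1}n^{-s}$. Empty sums are $0$. *)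

theory Defs
  imports Complex_Main
begin

definition H :: "nat \<Rightarrow> nat \<Rightarrow> real" where
  "H q n = (if q = 0 then real n else (\<Sum>j=1..n. 1 / real j ^ q))"

text \<open>S(q,m,t,j,1) = sum_{n>=1} (-1)^(n+1) H_n^(q) / (n^m (n+j)^t)\<close>
definition S :: "nat \<Rightarrow> nat \<Rightarrow> nat \<Rightarrow> nat \<Rightarrow> real" where
  "S q m t j = (\<Sum>k. (let n = Suc k in
      (-1) ^ (n + 1) * H q n / (real n ^ m * real (n + j) ^ t)))"

definition Spm :: "nat \<Rightarrow> nat \<Rightarrow> real" where
  "Spm p q = (\<Sum>k. (let n = Suc k in (-1) ^ (n - 1) * H p n / real n ^ q))"

definition Sppm :: "nat \<Rightarrow> nat \<Rightarrow> nat \<Rightarrow> real" where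
  "Sppm p1 p2 q = (\<Sum>k. (let n = Suc k in (-1) ^ (n - 1) * H p1 n * H p2 n / real n ^ q))"

definition zetabar :: "nat \<Rightarrow> real" where
  "zetabar s = (\<Sum>k. (let n = Suc k in (-1) ^ (n - 1) / real n ^ s))"

definition T :: "nat \<Rightarrow> nat \<Rightarrow> nat \<Rightarrow> real" where
  "T p1 p2 r = (\<Sum>k. (let n = Suc k in (-1) ^ (n + 1) * H p1 n * H p2 n / real (n + r)))"

end

theory Submission
  imports Defs "HOL-Analysis.Analysis"
begin

lemma H_0[simp]: "H p 0 = 0" by (simp add: H_def)

lemma H_Suc: "p \<ge> 1 \<Longrightarrow> H p (Suc n) = H p n + 1 / real (Suc n) ^ p"
  by (simp add: H_def)

lemma H_Suc0: "H 0 (Suc n) = H 0 n + 1"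
  by (simp add: H_def)

lemma H_nonneg: "0 \<le> H p n"
  by (auto simp: H_def intro!: sum_nonneg)

lemma H_le_harm: assumes "p \<ge> 1" shows "H p n \<le> harm n"
proof (induction n)
  case 0 then show ?case by (simp add: harm_altdef)
next
  case (Suc n)
  have "real (Suc n) ^ 1 \<le> real (Suc n) ^ p" by (rule power_increasing) (use assms in auto)
  then have "1 / real (Suc n) ^ p \<le> 1 / real (Suc n) ^ 1"
    by (intro divide_left_mono) auto
  moreover have "harm (Suc n) = harm n + 1 / real (Suc n)" by (simp add: harm_Suc inverse_eq_divide)
  ultimately show ?case using Suc assms H_Suc[OF assms, of n] by simp
qed

lemma harm_le_ln: "harm (Suc n) \<le> 1 + ln (real (Suc n))"
proof -
  have "harm (Suc n) - ln (real (Suc n)) \<le> harm (Suc 0) - ln (real (Suc 0))"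
    using decseq_harm_diff_ln unfolding decseq_def by blast
  moreover have "harm (Suc 0) = (1::real)" by (simp add: harm_altdef)
  ultimately show ?thesis by simp
qed

definition U :: "nat \<Rightarrow> real" where "U n = real n powr (1/4)"

lemma U_ge1: "n \<ge> 1 \<Longrightarrow> 1 \<le> U n"
  unfolding U_def by (simp add: ge_one_powr_ge_zero)

lemma U4: "U n ^ 4 = real n"
proof (cases "n = 0")
  case True then show ?thesis by (simp add: U_def)
next
  case False
  then have "U n ^ 4 = real n powr (real 4 * (1/4))" unfolding U_def by (subst powr_power) auto
  also have "\<dots> = real n" using False by simp
  finally show ?thesis .
qed

lemma U6: "n \<ge> 1 \<Longrightarrow> 1 / U n ^ 6 = real n powr (-3/2)"
proof -
  assume n: "n \<ge> 1"
  have "U n ^ 6 = real n powr (real 6 * (1/4))" unfolding U_def using n by (subst powr_power) auto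
  also have "\<dots> = real n powr (3/2)" by simp
  finally show ?thesis by (simp add: powr_minus_divide)
qed

lemma H_le_U: assumes "p \<ge> 1" "n \<ge> 1" shows "H p n \<le> 5 * U n"
proof -
  obtain m where m: "n = Suc m" using assms by (cases n) auto
  have "ln (real n) \<le> real n powr (1/4) / (1/4)"
    by (rule ln_powr_bound) (use assms in auto)
  then have "ln (real n) \<le> 4 * U n" by (simp add: U_def)
  then have "H p n \<le> 1 + 4 * U n"
    using H_le_harm[OF assms(1), of n] harm_le_ln[of m] m by simp
  then show ?thesis using U_ge1[OF assms(2)] by simp
qed

lemma summable_U: "summable (\<lambda>k. C / U (Suc k) ^ 6)"
proof -
  have "summable (\<lambda>n. real n powr (-3/2))" by (simp add: summable_real_powr_iff)
  then have "summable (\<lambda>k. real (Suc k) powr (-3/2))" by (subst summable_Suc_iff)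
  then have "summable (\<lambda>k. 1 / U (Suc k) ^ 6)" by (subst U6) auto
  then have "summable (\<lambda>k. C * (1 / U (Suc k) ^ 6))" by (rule summable_mult)
  then show ?thesis by simp
qed

lemma summable_by_U: assumes "\<And>k. \<bar>f k\<bar> \<le> C / U (Suc k) ^ 6" shows "summable f"
  by (rule summable_comparison_test'[OF summable_U[of C], of 0]) (use assms in auto)

lemma aux_bound:
  fixes u x h c D :: real
  assumes "1 \<le> u" "x = u ^ 4" "0 \<le> h" "h \<le> c * u ^ 2" "x * x \<le> D"
  shows "h / D \<le> c / u ^ 6"
proof -
  have x1: "1 \<le> x" using assms(1,2) by (simp add: one_le_power)
  then have xx: "1 \<le> x * x" by (metis mult_le_cancel_left1 order_trans zero_le_one not_le)
  have D1: "1 \<le> D" using xx assms(5) by linarith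
  have "h / D \<le> h / (x * x)" by (rule divide_left_mono) (use assms xx D1 in \<open>auto intro!: mult_pos_pos\<close>)
  also have "\<dots> \<le> c * u ^ 2 / (x * x)" by (rule divide_right_mono) (use assms xx in auto)
  also have "\<dots> = c / u ^ 6" using assms(1,2) by (simp add: field_simps power_add[symmetric])
  finally show ?thesis .
qed

lemma bdiff_real:
  fixes x y a b n :: real
  assumes "1 \<le> n" "0 \<le> x" "0 \<le> y" "0 \<le> a" "0 \<le> b" "(n+1)*a \<le> 1" "(n+1)*b \<le> 1"
  shows "\<bar>x*y/n - (x+a)*(y+b)/(n+1)\<bar> \<le> (x+1)*(y+1)/(n*n)"
proof -
  define num where "num = x*y - n*(x*b + y*a + a*b)"
  have eq: "x*y/n - (x+a)*(y+b)/(n+1) = num / (n*(n+1))"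
    using assms(1) unfolding num_def by (simp add: field_simps)
  have nb: "n*b \<le> 1" "n*a \<le> 1" using assms by (auto simp: algebra_simps)
  have b1: "b \<le> 1" using nb assms(1,5) by (metis mult_le_cancel_right1 order_trans le_less_linear not_le)
  have "n*(x*b) \<le> x" using nb(1) assms(2) by (metis mult.commute mult.left_commute mult_left_le)
  moreover have "n*(y*a) \<le> y" using nb(2) assms(3) by (metis mult.commute mult.left_commute mult_left_le)
  moreover have "n*(a*b) \<le> 1" using nb(2) b1 assms by (metis mult.assoc mult_left_le order_trans mult_nonneg_nonneg)
  moreover have "0 \<le> x*y" using assms by simp
  ultimately have lo: "- (x + y + 1) \<le> num" unfolding num_def by (simp add: algebra_simps)
  have hi: "num \<le> x * y" unfolding num_def using assms by (simp add: mult_nonneg_nonneg)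
  have e: "(x+1)*(y+1) = x*y + x + y + 1" by (simp add: algebra_simps)
  have "\<bar>num\<bar> \<le> (x+1)*(y+1)" unfolding abs_le_iff e using lo hi mult_nonneg_nonneg[OF assms(2,3)] assms(2,3) by linarith
  have p1: "0 < n*(n+1)" "0 < n*n" using assms(1) by auto
  have p2: "n*n \<le> n*(n+1)" using assms(1) by (simp add: algebra_simps)
  have p3: "0 \<le> (x+1)*(y+1)" using assms(2,3) by simp
  have "\<bar>num\<bar> / (n*(n+1)) \<le> (x+1)*(y+1) / (n*(n+1))"
    using divide_right_mono[OF \<open>\<bar>num\<bar> \<le> (x+1)*(y+1)\<close>, of "n*(n+1)"] p1 by linarith
  also have "\<dots> \<le> (x+1)*(y+1) / (n*n)"
    using divide_left_mono[OF p2 p3 mult_pos_pos[OF p1(1) p1(2)]] .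
  finally have fin: "\<bar>num\<bar> / (n*(n+1)) \<le> (x+1)*(y+1) / (n*n)" .
  have m: "\<bar>num / (n*(n+1))\<bar> = \<bar>num\<bar> / (n*(n+1))" using p1 by (simp add: abs_divide)
  show ?thesis unfolding eq m by (fact fin)
qed

definition tt :: "nat \<Rightarrow> nat \<Rightarrow> nat \<Rightarrow> nat \<Rightarrow> real" where
  "tt p1 p2 r n = (-1) ^ (n + 1) * H p1 n * H p2 n / real (n + r)"

definition s1 :: "nat \<Rightarrow> nat \<Rightarrow> nat \<Rightarrow> nat \<Rightarrow> real" where
  "s1 p q j n = (-1) ^ (n + 1) * H p n / (real n ^ q * real (n + j) ^ 1)"

lemma T_eq: "T p1 p2 r = (\<Sum>k. tt p1 p2 r (Suc k))"
  unfolding T_def tt_def Let_def ..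

lemma S_eq: "S q m 1 j = (\<Sum>k. s1 q m j (Suc k))"
  unfolding S_def s1_def Let_def ..

lemma Sppm_eq: "Sppm p1 p2 1 = (\<Sum>k. tt p1 p2 0 (Suc k))"
  unfolding Sppm_def tt_def Let_def by simp

lemma Spm_eq: "Spm p (q + 1) = (\<Sum>k. s1 p q 0 (Suc k))"
  unfolding Spm_def s1_def Let_def by (simp add: field_simps)

lemma cancel_aux: "(x::real) \<noteq> 0 \<Longrightarrow> c * x / (x ^ n * x ^ 1) = c / x ^ n"
  by (simp add: field_simps)

lemma zetabar_eq: "zetabar (q + 1) = (\<Sum>k. s1 0 (q + 1) 0 (Suc k))"
  unfolding zetabar_def s1_def Let_def
proof (intro arg_cong[where f=suminf] ext)
  fix k
  have "(-1) ^ (Suc k + 1) * H 0 (Suc k) / (real (Suc k) ^ (q + 1) * real (Suc k + 0) ^ 1)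
      = (-1) ^ (Suc k + 1) / real (Suc k) ^ (q + 1)"
    unfolding H_def by (simp only: if_P[OF refl] add_0_right cancel_aux[OF of_nat_neq_0])
  then show "(-1) ^ (Suc k - 1) / real (Suc k) ^ (q + 1) =
    (-1) ^ (Suc k + 1) * H 0 (Suc k) / (real (Suc k) ^ (q + 1) * real (Suc k + 0) ^ 1)" by simp
qed

lemma U_nonneg: "0 \<le> U n" by (simp add: U_def)

lemma pow_ge_self: "1 \<le> (x::real) \<Longrightarrow> 1 \<le> q \<Longrightarrow> x \<le> x ^ q"
  using power_increasing[of 1 q x] by simp

lemma summable_s1:
  assumes "p \<ge> 1" "q \<ge> 1"
  shows "summable (\<lambda>k. s1 p q j (Suc k))"
proof (rule summable_by_U[of _ 5])
  fix k
  define m where "m = Suc k"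
  have m1: "1 \<le> real m" unfolding m_def by simp
  have u1: "1 \<le> U m" using U_ge1[of m] m_def by simp
  have uu: "U m * 1 \<le> U m * U m" by (rule mult_left_mono[OF u1]) (use u1 in simp)
  have h: "H p m \<le> 5 * U m ^ 2"
    using H_le_U[OF assms(1), of m] m_def uu unfolding power2_eq_square by simp
  have D: "real m * real m \<le> real m ^ q * real (m + j) ^ 1"
    by (rule mult_mono) (use pow_ge_self[OF m1 assms(2)] m1 in simp_all)
  have "H p m / (real m ^ q * real (m + j) ^ 1) \<le> 5 / U m ^ 6"
    by (rule aux_bound[OF u1 U4[symmetric] H_nonneg h D])
  moreover have "\<bar>s1 p q j m\<bar> = H p m / (real m ^ q * real (m + j) ^ 1)"
    unfolding s1_def using H_nonneg[of p m] by (simp add: abs_mult abs_divide)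
  ultimately show "\<bar>s1 p q j (Suc k)\<bar> \<le> 5 / U (Suc k) ^ 6"
    unfolding m_def by simp
qed

lemma summable_s0:
  assumes "q \<ge> 2"
  shows "summable (\<lambda>k. s1 0 q j (Suc k))"
proof (rule summable_by_U[of _ 1])
  fix k
  define m where "m = Suc k"
  have m1: "1 \<le> real m" unfolding m_def by simp
  have u1: "1 \<le> U m" using U_ge1[of m] m_def by simp
  have h: "1 \<le> 1 * U m ^ 2" using u1 by (simp add: one_le_power)
  have q1: "1 \<le> q - 1" using assms by simp
  have D: "real m * real m \<le> real m ^ (q - 1) * real (m + j) ^ 1"
    by (rule mult_mono) (use pow_ge_self[OF m1 q1] m1 in simp_all)
  have "1 / (real m ^ (q - 1) * real (m + j) ^ 1) \<le> 1 / U m ^ 6"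
    by (rule aux_bound[OF u1 U4[symmetric] _ h D]) simp
  moreover have "real m / (real m ^ q * real (m + j) ^ 1) = 1 / (real m ^ (q - 1) * real (m + j) ^ 1)"
  proof -
    obtain q' where q': "q = Suc q'" using assms by (cases q) auto
    have "real m / (real m ^ q * real (m + j) ^ 1) = real m / (real m * (real m ^ q' * real (m + j) ^ 1))"
      unfolding q' by (simp only: power_Suc mult.assoc)
    also have "\<dots> = 1 / (real m ^ q' * real (m + j) ^ 1)" using m1 by simp
    finally show ?thesis unfolding q' by simp
  qed
  moreover have "\<bar>s1 0 q j m\<bar> = real m / (real m ^ q * real (m + j) ^ 1)"
    unfolding s1_def H_def by (simp add: abs_mult abs_divide)
  ultimately show "\<bar>s1 0 q j (Suc k)\<bar> \<le> 1 / U (Suc k) ^ 6"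
    unfolding m_def by simp
qed
lemma U2: "n \<ge> 1 \<Longrightarrow> 1 / U n ^ 2 = real n powr (-1/2)"
proof -
  assume n: "n \<ge> 1"
  have "U n ^ 2 = real n powr (real 2 * (1/4))" unfolding U_def using n by (subst powr_power) auto
  also have "\<dots> = real n powr (1/2)" by simp
  finally show ?thesis by (simp add: powr_minus_divide)
qed

lemma HH_le: assumes "p1 \<ge> 1" "p2 \<ge> 1" "m \<ge> 1"
  shows "H p1 m * H p2 m \<le> 25 * U m ^ 2"
proof -
  have "H p1 m * H p2 m \<le> (5 * U m) * (5 * U m)"
    using H_le_U[OF assms(1,3)] H_le_U[OF assms(2,3)] H_nonneg[of p1 m] H_nonneg[of p2 m]
    by (intro mult_mono) auto
  then show ?thesis by (simp add: power2_eq_square)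
qed

lemma summable_tdiff:
  assumes "p1 \<ge> 1" "p2 \<ge> 1"
  shows "summable (\<lambda>k. tt p1 p2 r (Suc k) - tt p1 p2 (Suc r) (Suc k))"
proof (rule summable_by_U[of _ 25])
  fix k
  define m where "m = Suc k"
  define A where "A = H p1 m * H p2 m"
  have m1: "1 \<le> real m" unfolding m_def by simp
  have u1: "1 \<le> U m" using U_ge1[of m] m_def by simp
  have A0: "0 \<le> A" unfolding A_def using H_nonneg by simp
  have h: "A \<le> 25 * U m ^ 2" unfolding A_def using HH_le[OF assms, of m] m_def by simp
  have D: "real m * real m \<le> real (m + r) * real (m + Suc r)"
    by (rule mult_mono) simp_all
  have "A / (real (m + r) * real (m + Suc r)) \<le> 25 / U m ^ 6"
    by (rule aux_bound[OF u1 U4[symmetric] A0 h D])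
  moreover have "tt p1 p2 r m - tt p1 p2 (Suc r) m = (-1) ^ (m + 1) * (A / (real (m + r) * real (m + Suc r)))"
  proof -
    define x where "x = real (m + r)"
    have x0: "0 < x" unfolding x_def m_def by simp
    have x1: "real (m + Suc r) = x + 1" unfolding x_def by simp
    have "tt p1 p2 r m - tt p1 p2 (Suc r) m = (-1) ^ (m + 1) * (A / x - A / (x + 1))"
      unfolding tt_def A_def x_def[symmetric] x1 by (simp add: algebra_simps)
    also have "A / x - A / (x + 1) = A / (x * (x + 1))" using x0 by (simp add: field_simps)
    finally show ?thesis unfolding x1 x_def .
  qed
  moreover have "\<bar>(-1) ^ (m + 1) * (A / (real (m + r) * real (m + Suc r)))\<bar>
      = A / (real (m + r) * real (m + Suc r))" using A0 by (simp add: abs_mult abs_divide)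
  ultimately show "\<bar>tt p1 p2 r (Suc k) - tt p1 p2 (Suc r) (Suc k)\<bar> \<le> 25 / U (Suc k) ^ 6"
    unfolding m_def by simp
qed

lemma limseq_even_odd':
  assumes "(\<lambda>n. f (2 * n)) \<longlonglongrightarrow> (l :: 'a :: topological_space)"
      and "(\<lambda>n. f (2 * n + 1)) \<longlonglongrightarrow> l"
  shows "f \<longlonglongrightarrow> l"
proof -
  have ev: "eventually P sequentially"
    if E: "eventually (\<lambda>n. P (2 * n)) sequentially" and O: "eventually (\<lambda>n. P (2 * n + 1)) sequentially" for P
  proof -
    from E obtain n_e where ne: "\<And>n. n \<ge> n_e \<Longrightarrow> P (2 * n)"
      by (auto simp: eventually_sequentially)
    from O obtain n_o where no: "\<And>n. n \<ge> n_o \<Longrightarrow> P (Suc (2 * n))"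
      by (auto simp: eventually_sequentially)
    show ?thesis
      unfolding eventually_sequentially
    proof (intro exI allI impI)
      fix n assume "max (2 * n_e) (2 * n_o + 1) \<le> n" then show "P n"
        using ne no by (cases "even n") (auto elim!: evenE oddE)
    qed
  qed
  show ?thesis using assms by (auto simp: filterlim_iff intro: ev)
qed

lemma summable_pairs:
  fixes f :: "nat \<Rightarrow> real"
  assumes "summable (\<lambda>i. f (2 * i) + f (2 * i + 1))" "f \<longlonglongrightarrow> 0"
  shows "summable f"
proof -
  obtain L where L: "(\<lambda>i. f (2 * i) + f (2 * i + 1)) sums L" using assms(1) by (auto simp: summable_def)
  have P2: "(\<Sum>k<2 * n. f k) = (\<Sum>i<n. f (2 * i) + f (2 * i + 1))" for n
    by (induction n) (simp_all add: algebra_simps)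
  have e: "(\<lambda>n. \<Sum>k<2 * n. f k) \<longlonglongrightarrow> L" using L unfolding sums_def P2 .
  have f2: "(\<lambda>n. f (2 * n)) \<longlonglongrightarrow> 0"
    by (rule LIMSEQ_subseq_LIMSEQ[OF assms(2), unfolded o_def]) (simp add: strict_mono_def)
  have "(\<lambda>n. (\<Sum>k<2 * n. f k) + f (2 * n)) \<longlonglongrightarrow> L + 0" by (rule tendsto_add[OF e f2])
  then have o: "(\<lambda>n. \<Sum>k<2 * n + 1. f k) \<longlonglongrightarrow> L" by simp
  have "(\<lambda>n. \<Sum>k<n. f k) \<longlonglongrightarrow> L" by (rule limseq_even_odd'[OF e o])
  then show ?thesis unfolding summable_def sums_def by blast
qed

lemma bdiff:
  assumes "p1 \<ge> 1" "p2 \<ge> 1" "n \<ge> 1"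
  shows "\<bar>H p1 n * H p2 n / real n - H p1 (Suc n) * H p2 (Suc n) / real (Suc n)\<bar> \<le> 36 / U n ^ 6"
proof -
  define x where "x = H p1 n"
  define y where "y = H p2 n"
  define a where "a = 1 / real (Suc n) ^ p1"
  define b where "b = 1 / real (Suc n) ^ p2"
  have n1: "1 \<le> real n" using assms by simp
  have u1: "1 \<le> U n" using U_ge1[OF assms(3)] .
  have sa: "(real n + 1) * a \<le> 1"
    unfolding a_def using pow_ge_self[of "real (Suc n)" p1] assms by (simp add: field_simps)
  have sb: "(real n + 1) * b \<le> 1"
    unfolding b_def using pow_ge_self[of "real (Suc n)" p2] assms by (simp add: field_simps)
  have x0: "0 \<le> x" "0 \<le> y" unfolding x_def y_def by (simp_all add: H_nonneg)
  have "\<bar>x*y/real n - (x+a)*(y+b)/(real n+1)\<bar> \<le> (x+1)*(y+1)/(real n * real n)"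
    by (rule bdiff_real[OF n1 x0 _ _ sa sb]) (simp_all add: a_def b_def)
  also have "\<dots> \<le> 36 / U n ^ 6"
  proof (rule aux_bound[OF u1 U4[symmetric]])
    show "0 \<le> (x+1)*(y+1)" using x0 by simp
    have "(x+1)*(y+1) \<le> (6 * U n) * (6 * U n)"
      using H_le_U[OF assms(1,3)] H_le_U[OF assms(2,3)] x0 u1 unfolding x_def y_def
      by (intro mult_mono) auto
    then show "(x+1)*(y+1) \<le> 36 * U n ^ 2" by (simp add: power2_eq_square)
  qed simp
  finally show ?thesis
    using H_Suc[OF assms(1), of n] H_Suc[OF assms(2), of n]
    unfolding x_def y_def a_def b_def by (simp add: add.commute)
qed

lemma U_mono: "m \<le> n \<Longrightarrow> U m \<le> U n"
  unfolding U_def by (intro powr_mono2) auto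

lemma summable_t0:
  assumes "p1 \<ge> 1" "p2 \<ge> 1"
  shows "summable (\<lambda>k. tt p1 p2 0 (Suc k))"
proof (rule summable_pairs)
  define b where "b n = H p1 n * H p2 n / real n" for n
  have tb: "tt p1 p2 0 n = (-1) ^ (n + 1) * b n" for n unfolding tt_def b_def by simp
  show "summable (\<lambda>i. tt p1 p2 0 (Suc (2 * i)) + tt p1 p2 0 (Suc (2 * i + 1)))"
  proof (rule summable_by_U[of _ 36])
    fix i
    have "tt p1 p2 0 (Suc (2 * i)) + tt p1 p2 0 (Suc (2 * i + 1)) = b (Suc (2*i)) - b (Suc (Suc (2*i)))"
      unfolding tb by simp
    moreover have "\<bar>b (Suc (2*i)) - b (Suc (Suc (2*i)))\<bar> \<le> 36 / U (Suc (2*i)) ^ 6"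
      unfolding b_def by (rule bdiff[OF assms]) simp
    moreover have "36 / U (Suc (2*i)) ^ 6 \<le> 36 / U (Suc i) ^ 6"
    proof -
      have "1 \<le> U (Suc i)" by (rule U_ge1) simp
      moreover have "U (Suc i) \<le> U (Suc (2*i))" by (rule U_mono) simp
      ultimately have "U (Suc i) ^ 6 \<le> U (Suc (2*i)) ^ 6" by (intro power_mono) auto
      moreover have "0 < U (Suc i) ^ 6" using \<open>1 \<le> U (Suc i)\<close> by simp
      ultimately show ?thesis by (intro divide_left_mono) (auto intro!: mult_pos_pos)
    qed
    ultimately show "\<bar>tt p1 p2 0 (Suc (2 * i)) + tt p1 p2 0 (Suc (2 * i + 1))\<bar> \<le> 36 / U (Suc i) ^ 6"
      by simp
  qed
  show "(\<lambda>k. tt p1 p2 0 (Suc k)) \<longlonglongrightarrow> 0"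
  proof (rule Lim_null_comparison)
    have fl: "filterlim (\<lambda>k. real (Suc k)) at_top sequentially"
      using filterlim_compose[OF filterlim_real_sequentially filterlim_Suc] by (simp add: o_def)
    have lim: "(\<lambda>k. real (Suc k) powr (-1/2)) \<longlonglongrightarrow> 0"
      using tendsto_neg_powr[OF _ fl, of "-1/2"] by simp
    show "(\<lambda>k. 25 * real (Suc k) powr (-1/2)) \<longlonglongrightarrow> 0"
      using tendsto_mult_right_zero[OF lim, of 25] by simp
    show "\<forall>\<^sub>F k in sequentially. norm (tt p1 p2 0 (Suc k)) \<le> 25 * real (Suc k) powr (-1/2)"
    proof (intro always_eventually allI)
      fix k
      define m where "m = Suc k"
      have u1: "1 \<le> U m" using U_ge1[of m] m_def by simp
      have m1: "1 \<le> real m" unfolding m_def by simp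
      have "b m \<le> 25 * U m ^ 2 / U m ^ 4"
        unfolding b_def U4 using HH_le[OF assms, of m] m_def m1 by (intro divide_right_mono) auto
      also have "\<dots> = 25 * (1 / U m ^ 2)" using u1 by (simp add: field_simps power_add[symmetric])
      also have "\<dots> = 25 * real m powr (-1/2)" using U2[of m] m_def by simp
      finally have "b m \<le> 25 * real m powr (-1/2)" .
      moreover have "0 \<le> b m" unfolding b_def using H_nonneg by simp
      ultimately show "norm (tt p1 p2 0 (Suc k)) \<le> 25 * real (Suc k) powr (-1/2)"
        unfolding tb m_def[symmetric] by (simp add: abs_mult)
    qed
  qed
qed

lemma summable_t:
  assumes "p1 \<ge> 1" "p2 \<ge> 1"
  shows "summable (\<lambda>k. tt p1 p2 r (Suc k))"
proof (induction r)
  case 0 then show ?case using summable_t0[OF assms] .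
next
  case (Suc r)
  have "summable (\<lambda>k. tt p1 p2 r (Suc k) - (tt p1 p2 r (Suc k) - tt p1 p2 (Suc r) (Suc k)))"
    by (rule summable_diff[OF Suc summable_tdiff[OF assms]])
  then show ?case by simp
qed

lemma rec_term:
  assumes "p1 \<ge> 1" "p2 \<ge> 1"
  shows "tt p1 p2 (Suc j) k = - tt p1 p2 j (Suc k) + s1 p1 p2 j (Suc k) + s1 p2 p1 j (Suc k)
          - s1 0 (p1 + p2 + 1) j (Suc k)"
proof -
  define m where "m = Suc k"
  define X where "X = H p1 m"
  define Y where "Y = H p2 m"
  define a where "a = 1 / real m ^ p1"
  define b where "b = 1 / real m ^ p2"
  define d where "d = real (m + j)"
  define sg :: real where "sg = (-1) ^ (k + 1)"
  have m0: "real m \<noteq> 0" "0 < real m" unfolding m_def by simp_all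
  have d0: "d \<noteq> 0" unfolding d_def m_def by simp
  have hk1: "H p1 k = X - a" using H_Suc[OF assms(1), of k] unfolding X_def a_def m_def by simp
  have hk2: "H p2 k = Y - b" using H_Suc[OF assms(2), of k] unfolding Y_def b_def m_def by simp
  have sgm: "(-1) ^ (m + 1) = - sg" unfolding sg_def m_def by simp
  have kj: "k + Suc j = m + j" unfolding m_def by simp
  have e0: "tt p1 p2 (Suc j) k = sg * (X - a) * (Y - b) / d"
    unfolding tt_def sg_def d_def kj hk1 hk2 ..
  have e1: "tt p1 p2 j m = - sg * X * Y / d"
    unfolding tt_def sgm X_def Y_def d_def ..
  have e2: "s1 p1 p2 j m = - sg * (X * b) / d"
    unfolding s1_def sgm X_def b_def d_def[symmetric] using m0 d0 by (simp add: field_simps)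
  have e3: "s1 p2 p1 j m = - sg * (Y * a) / d"
    unfolding s1_def sgm Y_def a_def d_def[symmetric] using m0 d0 by (simp add: field_simps)
  have e4: "s1 0 (p1 + p2 + 1) j m = - sg * (a * b) / d"
  proof -
    have "real m ^ (p1 + p2 + 1) = real m ^ p1 * real m ^ p2 * real m" by (simp add: power_add)
    then show ?thesis
      unfolding s1_def sgm a_def b_def d_def[symmetric] using m0 d0 by (simp add: H_def field_simps)
  qed
  show ?thesis unfolding m_def[symmetric] e0 e1 e2 e3 e4 using d0
    by (simp add: field_simps)
qed

lemma tt_0[simp]: "tt p1 p2 r 0 = 0" by (simp add: tt_def)

lemma T_rec:
  assumes "p1 \<ge> 1" "p2 \<ge> 1"
  shows "T p1 p2 (Suc j) = - T p1 p2 j + ((\<Sum>k. s1 p1 p2 j (Suc k)) + (\<Sum>k. s1 p2 p1 j (Suc k))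
           - (\<Sum>k. s1 0 (p1 + p2 + 1) j (Suc k)))"
proof -
  have "(\<lambda>k. tt p1 p2 (Suc j) (Suc k)) sums T p1 p2 (Suc j)"
    unfolding T_eq by (rule summable_sums[OF summable_t[OF assms]])
  then have sA: "(\<lambda>k. tt p1 p2 (Suc j) k) sums T p1 p2 (Suc j)"
    by (simp add: sums_Suc_iff)
  have q: "p1 + p2 + 1 \<ge> 2" using assms by simp
  have sB: "(\<lambda>k. - tt p1 p2 j (Suc k) + s1 p1 p2 j (Suc k) + s1 p2 p1 j (Suc k)
          - s1 0 (p1 + p2 + 1) j (Suc k)) sums
        (- T p1 p2 j + (\<Sum>k. s1 p1 p2 j (Suc k)) + (\<Sum>k. s1 p2 p1 j (Suc k))
           - (\<Sum>k. s1 0 (p1 + p2 + 1) j (Suc k)))"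
    unfolding T_eq
    by (intro sums_add sums_diff sums_minus summable_sums summable_t summable_s1 summable_s0 assms q)
  have "T p1 p2 (Suc j) = - T p1 p2 j + (\<Sum>k. s1 p1 p2 j (Suc k)) + (\<Sum>k. s1 p2 p1 j (Suc k))
           - (\<Sum>k. s1 0 (p1 + p2 + 1) j (Suc k))"
    using sums_unique2[OF sA sB[folded rec_term[OF assms]]] .
  then show ?thesis by simp
qed


lemma closed_form:
  assumes "p1 \<ge> 1" "p2 \<ge> 1"
  defines "c \<equiv> \<lambda>j. (\<Sum>k. s1 p1 p2 j (Suc k)) + (\<Sum>k. s1 p2 p1 j (Suc k))
           - (\<Sum>k. s1 0 (p1 + p2 + 1) j (Suc k))"
  shows "T p1 p2 (Suc r) = (-1) ^ (Suc r) * (T p1 p2 0 - c 0) + (\<Sum>j\<in>{1..<Suc r}. (-1) ^ (r - j) * c j)"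
proof (induction r)
  case 0
  show ?case using T_rec[OF assms(1,2), of 0] unfolding c_def by simp
next
  case (Suc r)
  have sgn: "(-1) ^ (Suc r - j) = - ((-1) ^ (r - j) :: real)" if "j \<in> {1..<Suc r}" for j
  proof -
    have "Suc r - j = Suc (r - j)" using that by auto
    then show ?thesis by simp
  qed
  have "(\<Sum>j\<in>{1..<Suc (Suc r)}. (-1) ^ (Suc r - j) * c j)
      = (\<Sum>j\<in>{1..<Suc r}. (-1) ^ (Suc r - j) * c j) + c (Suc r)"
    by simp
  also have "(\<Sum>j\<in>{1..<Suc r}. (-1) ^ (Suc r - j) * c j) = - (\<Sum>j\<in>{1..<Suc r}. (-1) ^ (r - j) * c j)"
    unfolding sum_negf[symmetric] by (rule sum.cong[OF refl]) (simp add: sgn)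
  finally have e: "(\<Sum>j\<in>{1..<Suc (Suc r)}. (-1) ^ (Suc r - j) * c j)
      = - (\<Sum>j\<in>{1..<Suc r}. (-1) ^ (r - j) * c j) + c (Suc r)" .
  have "T p1 p2 (Suc (Suc r)) = - T p1 p2 (Suc r) + c (Suc r)"
    using T_rec[OF assms(1,2), of "Suc r"] unfolding c_def by simp
  then show ?case unfolding e Suc by simp
qed

theorem lemma9:
  fixes p1 p2 r :: nat
  assumes "p1 \<ge> 1" and "p2 \<ge> 1" and "r \<ge> 1"
  shows "T p1 p2 r =
    (-1) ^ r * (Sppm p1 p2 1 - Spm p1 (p2 + 1) - Spm p2 (p1 + 1) + zetabar (p1 + p2 + 1))
    + (\<Sum>j\<in>{1..<r}. (-1) ^ (r - 1 - j) * (S p1 p2 1 j + S p2 p1 1 j))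
    + (\<Sum>j\<in>{1..<r}. (-1) ^ (r - j) * S 0 (p1 + p2 + 1) 1 j)"
proof -
  obtain r' where r: "r = Suc r'" using assms(3) by (cases r) auto
  define c where "c \<equiv> \<lambda>j. (\<Sum>k. s1 p1 p2 j (Suc k)) + (\<Sum>k. s1 p2 p1 j (Suc k))
           - (\<Sum>k. s1 0 (p1 + p2 + 1) j (Suc k))"
  have cf: "T p1 p2 r = (-1) ^ r * (T p1 p2 0 - c 0) + (\<Sum>j\<in>{1..<r}. (-1) ^ (r' - j) * c j)"
    unfolding r c_def by (rule closed_form[OF assms(1,2)])
  have T0: "T p1 p2 0 = Sppm p1 p2 1" unfolding T_eq Sppm_eq ..
  have c0: "c 0 = Spm p1 (p2 + 1) + Spm p2 (p1 + 1) - zetabar (p1 + p2 + 1)"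
    unfolding c_def Spm_eq zetabar_eq by (simp add: add.commute)
  have cj: "(-1) ^ (r' - j) * c j = (-1) ^ (r - 1 - j) * (S p1 p2 1 j + S p2 p1 1 j)
      + (-1) ^ (r - j) * S 0 (p1 + p2 + 1) 1 j" if "j \<in> {1..<r}" for j
  proof -
    have "r - j = Suc (r' - j)" using that r by auto
    then have "(-1) ^ (r - j) = - ((-1) ^ (r' - j) :: real)" by simp
    then show ?thesis unfolding c_def S_eq r by (simp add: algebra_simps)
  qed
  have "(\<Sum>j\<in>{1..<r}. (-1) ^ (r' - j) * c j) =
     (\<Sum>j\<in>{1..<r}. (-1) ^ (r - 1 - j) * (S p1 p2 1 j + S p2 p1 1 j))
    + (\<Sum>j\<in>{1..<r}. (-1) ^ (r - j) * S 0 (p1 + p2 + 1) 1 j)"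
    unfolding sum.distrib[symmetric] by (rule sum.cong[OF refl]) (rule cj)
  then show ?thesis unfolding cf T0 c0 by (simp add: algebra_simps)
qed


end
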